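(* Let $u,v:\mathbb{C}\to\mathbb{R}$ be harmonic functions, $f=u+iv$, $\mathcal{R}_f=f(\mathbb{C})$. Suppose that for some $\alpha\in\mathbb{R}$, $$\mathcal{D}(\mathcal{R}_f)\subset\{e^{i\theta}:\ \alpha-\pi/2\le\theta\le\alpha+\pi/2\}.$$ Then there exists $c\in\mathbb{R}$ such that $(\cos\alpha)u+(\sin\alpha)v=c$ on $\mathbb{C}$. In particular $\mathcal{R}_f$ is a line or a point.
   Context: $\partial\mathbb{D}$ is the unit circle. For a set $\mathcal{R}\subset\mathbb{C}$, a point $e^{i\theta}\in\partial\mathbb{D}$ is an asymptotic direction of $\mathcal{R}$ if there exist points $w_n\in\mathcal{R}$ and positive numbers $\varepsilon_n\to 0$ with $\varepsilon_n w_n\to e^{i\theta}$; $\mathcal{D}(\mathcal{R})$ denotes the set of asymptotic directions of $\mathcal{R}$. *)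

theory Defs
  imports "HOL-Analysis.Analysis"
begin

definition has_partials :: "(complex \<Rightarrow> real) \<Rightarrow> (complex \<Rightarrow> real) \<Rightarrow> (complex \<Rightarrow> real) \<Rightarrow> bool" where
  "has_partials u ux uy \<longleftrightarrow>
     (\<forall>z. (u has_derivative (\<lambda>h. ux z * Re h + uy z * Im h)) (at z))"

definition harmonic :: "(complex \<Rightarrow> real) \<Rightarrow> bool" where
  "harmonic u \<longleftrightarrow>
     (\<exists>ux uy uxx uxy uyx uyy.
        has_partials u ux uy \<and> has_partials ux uxx uxy \<and> has_partials uy uyx uyy \<and>
        continuous_on UNIV uxx \<and> continuous_on UNIV uxy \<and>
        continuous_on UNIV uyx \<and> continuous_on UNIV uyy \<and>
        (\<forall>z. uxx z + uyy z = 0))"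

definition asym_dirs :: "complex set \<Rightarrow> complex set" where
  "asym_dirs R = {\<zeta>. norm \<zeta> = 1 \<and>
     (\<exists>w \<epsilon>. (\<forall>n. w n \<in> R \<and> \<epsilon> n > (0::real)) \<and> \<epsilon> \<longlonglongrightarrow> 0 \<and>
             (\<lambda>n. complex_of_real (\<epsilon> n) * w n) \<longlonglongrightarrow> \<zeta>)}"

end

theory Submission imports Defs "HOL-Complex_Analysis.Complex_Analysis" begin

lemma px:
  assumes "has_partials u ux uy"
  shows "((\<lambda>t. u (z + of_real t)) has_real_derivative ux (z + of_real t)) (at t)"
proof -
  have d: "(u has_derivative (\<lambda>h. ux (z + of_real t) * Re h + uy (z + of_real t) * Im h)) (at (z + of_real t))"
    using assms unfolding has_partials_def by blast
  have i: "((\<lambda>t. z + of_real t) has_derivative (\<lambda>s. of_real s)) (at t)"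
    by (auto intro!: derivative_eq_intros)
  have "((\<lambda>t. u (z + of_real t)) has_derivative (\<lambda>s. ux (z + of_real t) * Re (of_real s) + uy (z + of_real t) * Im (of_real s))) (at t)"
    using has_derivative_compose[OF i d] by simp
  then show ?thesis unfolding has_field_derivative_def
    by (rule has_derivative_eq_rhs) (auto simp: fun_eq_iff)
qed

lemma py:
  assumes "has_partials u ux uy"
  shows "((\<lambda>t. u (z + \<i> * of_real t)) has_real_derivative uy (z + \<i> * of_real t)) (at t)"
proof -
  have d: "(u has_derivative (\<lambda>h. ux (z + \<i> * of_real t) * Re h + uy (z + \<i> * of_real t) * Im h)) (at (z + \<i> * of_real t))"
    using assms unfolding has_partials_def by blast
  have i: "((\<lambda>t. z + \<i> * of_real t) has_derivative (\<lambda>s. \<i> * of_real s)) (at t)"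
    by (auto intro!: derivative_eq_intros)
  have "((\<lambda>t. u (z + \<i> * of_real t)) has_derivative (\<lambda>s. ux (z + \<i> * of_real t) * Re (\<i> * of_real s) + uy (z + \<i> * of_real t) * Im (\<i> * of_real s))) (at t)"
    using has_derivative_compose[OF i d] by simp
  then show ?thesis unfolding has_field_derivative_def
    by (rule has_derivative_eq_rhs) (auto simp: fun_eq_iff)
qed

lemma clairaut:
  assumes pu: "has_partials u ux uy" and pux: "has_partials ux uxx uxy"
    and puy: "has_partials uy uyx uyy"
    and c1: "continuous_on UNIV uxy" and c2: "continuous_on UNIV uyx"
  shows "uxy z = uyx z"
proof (rule ccontr)
  assume ne: "uxy z \<noteq> uyx z"
  define d where "d = \<bar>uxy z - uyx z\<bar>"
  have d0: "d > 0" using ne by (simp add: d_def)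
  have ic1: "isCont uxy z" and ic2: "isCont uyx z"
    using c1 c2 by (auto simp: continuous_on_eq_continuous_at)
  obtain \<delta>1 where "\<delta>1 > 0" and \<delta>1: "\<And>w. dist w z < \<delta>1 \<Longrightarrow> dist (uxy w) (uxy z) < d/2"
    using ic1 d0 unfolding continuous_at_eps_delta by (meson half_gt_zero)
  obtain \<delta>2 where "\<delta>2 > 0" and \<delta>2: "\<And>w. dist w z < \<delta>2 \<Longrightarrow> dist (uyx w) (uyx z) < d/2"
    using ic2 d0 unfolding continuous_at_eps_delta by (meson half_gt_zero)
  define h where "h = min \<delta>1 \<delta>2 / 2"
  have h0: "h > 0" using \<open>\<delta>1 > 0\<close> \<open>\<delta>2 > 0\<close> by (simp add: h_def)
  define \<Delta> where "\<Delta> = u (z + of_real h + \<i> * of_real h) - u (z + of_real h) - u (z + \<i> * of_real h) + u z"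
  have small: "dist (z + of_real a + \<i> * of_real b) z < min \<delta>1 \<delta>2" if "0 < a" "a < h" "0 < b" "b < h" for a b
  proof -
    have "dist (z + of_real a + \<i> * of_real b) z = cmod (Complex a b)"
    proof -
      have "z + of_real a + \<i> * of_real b - z = Complex a b" by (simp add: complex_eq_iff)
      then show ?thesis by (simp add: dist_norm)
    qed
    also have "\<dots> \<le> \<bar>a\<bar> + \<bar>b\<bar>" using cmod_le[of "Complex a b"] by simp
    also have "\<dots> < min \<delta>1 \<delta>2" using that by (simp add: h_def)
    finally show ?thesis .
  qed
  have D1: "DERIV (\<lambda>t. u (z + \<i> * of_real h + of_real t) - u (z + of_real t)) x :> (ux (z + \<i> * of_real h + of_real x) - ux (z + of_real x))" for x
    by (intro DERIV_diff px[OF pu])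
  obtain \<xi> where \<xi>: "0 < \<xi>" "\<xi> < h" and e1:
    "u (z + \<i> * of_real h + of_real h) - u (z + of_real h) - (u (z + \<i> * of_real h + of_real 0) - u (z + of_real 0))
      = (h - 0) * (ux (z + \<i> * of_real h + of_real \<xi>) - ux (z + of_real \<xi>))"
    using MVT2[OF h0 D1] by blast
  have D2: "DERIV (\<lambda>s. ux (z + of_real \<xi> + \<i> * of_real s)) x :> uxy (z + of_real \<xi> + \<i> * of_real x)" for x
    by (rule py[OF pux])
  obtain \<eta> where \<eta>: "0 < \<eta>" "\<eta> < h" and e2:
    "ux (z + of_real \<xi> + \<i> * of_real h) - ux (z + of_real \<xi> + \<i> * of_real 0)
      = (h - 0) * uxy (z + of_real \<xi> + \<i> * of_real \<eta>)"
    using MVT2[OF h0 D2] by blast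
  have r1: "\<Delta> = h * h * uxy (z + of_real \<xi> + \<i> * of_real \<eta>)"
  proof -
    have "\<Delta> = h * (ux (z + \<i> * of_real h + of_real \<xi>) - ux (z + of_real \<xi>))"
      using e1 by (simp add: \<Delta>_def algebra_simps)
    also have "ux (z + \<i> * of_real h + of_real \<xi>) - ux (z + of_real \<xi>) = h * uxy (z + of_real \<xi> + \<i> * of_real \<eta>)"
      using e2 by (simp add: algebra_simps)
    finally show ?thesis by simp
  qed
  have D3: "DERIV (\<lambda>s. u (z + of_real h + \<i> * of_real s) - u (z + \<i> * of_real s)) x :> (uy (z + of_real h + \<i> * of_real x) - uy (z + \<i> * of_real x))" for x
    by (intro DERIV_diff py[OF pu])
  obtain \<eta>' where \<eta>': "0 < \<eta>'" "\<eta>' < h" and e3: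
    "u (z + of_real h + \<i> * of_real h) - u (z + \<i> * of_real h) - (u (z + of_real h + \<i> * of_real 0) - u (z + \<i> * of_real 0))
      = (h - 0) * (uy (z + of_real h + \<i> * of_real \<eta>') - uy (z + \<i> * of_real \<eta>'))"
    using MVT2[OF h0 D3] by blast
  have D4: "DERIV (\<lambda>t. uy (z + \<i> * of_real \<eta>' + of_real t)) x :> uyx (z + \<i> * of_real \<eta>' + of_real x)" for x
    by (rule px[OF puy])
  obtain \<xi>' where \<xi>': "0 < \<xi>'" "\<xi>' < h" and e4:
    "uy (z + \<i> * of_real \<eta>' + of_real h) - uy (z + \<i> * of_real \<eta>' + of_real 0)
      = (h - 0) * uyx (z + \<i> * of_real \<eta>' + of_real \<xi>')"
    using MVT2[OF h0 D4] by blast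
  have r2: "\<Delta> = h * h * uyx (z + of_real \<xi>' + \<i> * of_real \<eta>')"
  proof -
    have "\<Delta> = h * (uy (z + of_real h + \<i> * of_real \<eta>') - uy (z + \<i> * of_real \<eta>'))"
      using e3 by (simp add: \<Delta>_def algebra_simps)
    also have "uy (z + of_real h + \<i> * of_real \<eta>') - uy (z + \<i> * of_real \<eta>') = h * uyx (z + of_real \<xi>' + \<i> * of_real \<eta>')"
      using e4 by (simp add: algebra_simps)
    finally show ?thesis by simp
  qed
  have eq: "uxy (z + of_real \<xi> + \<i> * of_real \<eta>) = uyx (z + of_real \<xi>' + \<i> * of_real \<eta>')"
    using r1 r2 h0 by simp
  have a1: "\<bar>uxy (z + of_real \<xi> + \<i> * of_real \<eta>) - uxy z\<bar> < d/2"
    using \<delta>1[OF less_le_trans[OF small[OF \<xi> \<eta>] min.cobounded1]] by (simp add: dist_real_def)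
  have a2: "\<bar>uyx (z + of_real \<xi>' + \<i> * of_real \<eta>') - uyx z\<bar> < d/2"
    using \<delta>2[OF less_le_trans[OF small[OF \<xi>' \<eta>'] min.cobounded2]] by (simp add: dist_real_def)
  have tri: "\<And>a b X Y::real. \<bar>a - X\<bar> < \<bar>X - Y\<bar> / 2 \<Longrightarrow> \<bar>a - Y\<bar> < \<bar>X - Y\<bar> / 2 \<Longrightarrow> False"
    by (simp add: abs_if split: if_split_asm)
  show False using a1 a2 eq unfolding d_def by (metis tri)
qed


lemma harmonic_re:
  assumes "harmonic u" shows "\<exists>F. F holomorphic_on UNIV \<and> (\<forall>z. Re (F z) = u z)"
proof -
  obtain ux uy uxx uxy uyx uyy where pu: "has_partials u ux uy" and pux: "has_partials ux uxx uxy"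
    and puy: "has_partials uy uyx uyy" and c2: "continuous_on UNIV uxy" and c3: "continuous_on UNIV uyx"
    and lap: "\<forall>z. uxx z + uyy z = 0"
    using assms unfolding harmonic_def by blast
  have sym: "uxy z = uyx z" for z by (rule clairaut[OF pu pux puy c2 c3])
  define g where "g = (\<lambda>z. of_real (ux z) - \<i> * of_real (uy z))"
  have gd: "(g has_field_derivative Complex (uxx z) (- uxy z)) (at z)" for z
  proof -
    have dx: "(ux has_derivative (\<lambda>h. uxx z * Re h + uxy z * Im h)) (at z)"
      using pux unfolding has_partials_def by blast
    have dy: "(uy has_derivative (\<lambda>h. uyx z * Re h + uyy z * Im h)) (at z)"
      using puy unfolding has_partials_def by blast
    have "(g has_derivative (\<lambda>h. of_real (uxx z * Re h + uxy z * Im h) - \<i> * of_real (uyx z * Re h + uyy z * Im h))) (at z)"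
      unfolding g_def by (intro derivative_intros dx dy)
    moreover have "uyy z = - uxx z" using lap by (simp add: eq_neg_iff_add_eq_0 add.commute)
    ultimately show ?thesis unfolding has_field_derivative_def
      by (elim has_derivative_eq_rhs) (auto simp: fun_eq_iff complex_eq_iff sym[of z] algebra_simps)
  qed
  have hol: "g holomorphic_on UNIV"
    using gd by (auto simp: holomorphic_on_open)
  obtain F0 where F0: "\<And>x. (F0 has_field_derivative g x) (at x)"
    using holomorphic_convex_primitive'[of UNIV g] hol by auto
  have "((\<lambda>z. u z - Re (F0 z)) has_derivative (\<lambda>h. 0)) (at z within UNIV)" for z
  proof -
    have d1: "(u has_derivative (\<lambda>h. ux z * Re h + uy z * Im h)) (at z)"
      using pu unfolding has_partials_def by blast
    have d2: "((\<lambda>z. Re (F0 z)) has_derivative (\<lambda>h. Re (g z * h))) (at z)"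
      using bounded_linear.has_derivative[OF bounded_linear_Re F0[of z, unfolded has_field_derivative_def]] .
    show ?thesis using has_derivative_diff[OF d1 d2]
      by (elim has_derivative_eq_rhs) (auto simp: g_def fun_eq_iff)
  qed
  then obtain c where c: "\<forall>z\<in>UNIV. u z - Re (F0 z) = c"
    using has_derivative_zero_constant[of UNIV "\<lambda>z. u z - Re (F0 z)"] by auto
  have "(\<lambda>z. F0 z + of_real c) holomorphic_on UNIV"
  proof -
    have "((\<lambda>z. F0 z + of_real c) has_field_derivative g x + 0) (at x)" for x
      by (intro DERIV_add F0 DERIV_const)
    then show ?thesis by (auto simp: holomorphic_on_open)
  qed
  moreover have "\<forall>z. Re (F0 z + of_real c) = u z" using c by (metis UNIV_I add.commute diff_add_cancel plus_complex.sel(1) Re_complex_of_real)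
  ultimately show ?thesis by blast
qed


lemma re_bounded_below_const:
  assumes hF: "F holomorphic_on UNIV" and B: "\<And>z. Re (F z) \<ge> B"
  shows "Re (F z) = Re (F 0)"
proof -
  have h: "(\<lambda>z. exp (- F z)) holomorphic_on UNIV"
    using hF by (intro holomorphic_intros)
  have "bounded (range (\<lambda>z. exp (- F z)))"
    unfolding bounded_iff
  proof (intro exI ballI)
    fix x assume "x \<in> range (\<lambda>z. exp (- F z))"
    then obtain w where "x = exp (- F w)" by auto
    then show "cmod x \<le> exp (- B)" using B[of w] by (simp add: norm_exp_eq_Re)
  qed
  then have "(\<lambda>z. exp (- F z)) constant_on UNIV" using Liouville_theorem[OF h] by blast
  then have "exp (- F z) = exp (- F 0)" unfolding constant_on_def by auto
  then have "cmod (exp (- F z)) = cmod (exp (- F 0))" by simp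
  then show ?thesis by (simp add: norm_exp_eq_Re)
qed

lemma re_bounded_above_const:
  assumes hF: "F holomorphic_on UNIV" and B: "\<And>z. Re (F z) \<le> B"
  shows "Re (F z) = Re (F 0)"
proof -
  have "Re (- F z) = Re (- F 0)"
    by (rule re_bounded_below_const[of "\<lambda>z. - F z" "-B"]) (use hF B in \<open>auto intro: holomorphic_intros\<close>)
  then show ?thesis by simp
qed

lemma aux1: "(r::real) > 0 \<Longrightarrow> a * (r / c) \<le> 1 \<Longrightarrow> c > 0 \<Longrightarrow> a \<le> c / r"
  by (simp add: field_simps)

lemma aux2: "(k::real) > 0 \<Longrightarrow> - (k * X) \<le> L \<Longrightarrow> - L / k \<le> X"
  by (simp add: field_simps)

lemma aux3: "(L::real) \<ge> 0 \<Longrightarrow> \<eta> > 0 \<Longrightarrow> L / (2 * (L + 1) / \<eta>) \<le> \<eta> / 2"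
  by (simp add: field_simps)

lemma key:
  assumes hF: "F holomorphic_on UNIV" and hG: "G holomorphic_on UNIV"
    and r0: "r0 > 0" and neg: "\<forall>w\<in>ball z0 r0. Re (G w) < 0"
    and gr: "\<forall>\<epsilon>>0. \<exists>C. \<forall>w. Re (G w) \<ge> 0 \<longrightarrow> Re (F w) + \<epsilon> * Re (G w) \<ge> -C"
  shows "\<exists>C1. \<forall>z. Re (G z) \<ge> 0 \<longrightarrow> Re (F z) \<ge> -C1"
proof -
  obtain C1 where C1: "\<forall>w. Re (G w) \<ge> 0 \<longrightarrow> Re (F w) + 1 * Re (G w) \<ge> -C1"
    using gr zero_less_one by blast
  have zero: "Re (F w) \<ge> -C1" if "Re (G w) = 0" for w using C1[rule_format, of w] that by simp
  have contG: "continuous_on UNIV (\<lambda>w. Re (G w))"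
    using holomorphic_on_imp_continuous_on[OF hG] by (intro continuous_intros)
  have outb: "cmod (w - z0) \<ge> r0" if "Re (G w) \<ge> 0" for w
    using neg that by (auto simp: dist_norm norm_minus_commute not_less[symmetric])
  have main: "Re (F z) \<ge> -C1 - \<eta>" if zpos: "Re (G z) > 0" and \<eta>0: "\<eta> > 0" for z \<eta>
  proof -
    define \<epsilon> where "\<epsilon> = \<eta> / (4 * Re (G z))"
    have \<epsilon>0: "\<epsilon> > 0" using zpos \<eta>0 by (simp add: \<epsilon>_def)
    obtain C\<epsilon> where C\<epsilon>: "\<forall>w. Re (G w) \<ge> 0 \<longrightarrow> Re (F w) + \<epsilon> * Re (G w) \<ge> -C\<epsilon>"
      using gr \<epsilon>0 by blast
    define H where "H = (\<lambda>w. F w + of_real (2*\<epsilon>) * G w)"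
    have ReH: "Re (H w) = Re (F w) + 2*\<epsilon>*Re (G w)" for w by (simp add: H_def)
    have hH: "H holomorphic_on UNIV" unfolding H_def using hF hG by (intro holomorphic_intros)
    define L where "L = ln (cmod (z - z0) / r0)"
    have zr: "cmod (z - z0) \<ge> r0" using outb zpos by simp
    have L0: "L \<ge> 0" using zr r0 by (simp add: L_def)
    define k where "k = 2 * (L + 1) / \<eta>"
    have k0: "k > 0" using L0 \<eta>0 by (simp add: k_def)
    define E where "E = exp (k * (C\<epsilon> - C1))"
    have E0: "E > 0" by (simp add: E_def)
    define R where "R = cmod z0 + r0 * E + cmod z + 1"
    define \<Psi> where "\<Psi> = (\<lambda>w. exp (- (of_real k * (H w + of_real C1))) * (of_real r0 / (w - z0)))"
    have norm\<Psi>: "cmod (\<Psi> w) = exp (- (k * (Re (H w) + C1))) * (r0 / cmod (w - z0))" for w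
      using r0 by (simp add: \<Psi>_def norm_mult norm_divide norm_exp_eq_Re)
    define S where "S = {w. Re (G w) > 0} \<inter> ball 0 R"
    have openS: "open S" unfolding S_def
      by (intro open_Int open_ball open_Collect_less continuous_on_const contG)
    have "closed ({w. Re (G w) \<ge> 0} \<inter> cball 0 R)"
      by (intro closed_Int closed_cball closed_Collect_le continuous_on_const contG)
    then have clS: "closure S \<subseteq> {w. Re (G w) \<ge> 0} \<inter> cball 0 R"
      by (rule closure_minimal[rotated]) (auto simp: S_def)
    have hol\<Psi>: "\<Psi> holomorphic_on (UNIV - {z0})"
      unfolding \<Psi>_def using hH by (intro holomorphic_intros) auto
    have z0S: "z0 \<notin> closure S"
    proof
      assume "z0 \<in> closure S"
      then have "Re (G z0) \<ge> 0" using clS by auto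
      moreover have "Re (G z0) < 0" using neg r0 by auto
      ultimately show False by simp
    qed
    have "cmod (\<Psi> z) \<le> 1"
    proof (rule maximum_modulus_frontier[of \<Psi> S])
      show "\<Psi> holomorphic_on interior S"
        using z0S interior_subset closure_subset by (intro holomorphic_on_subset[OF hol\<Psi>]) blast
      show "continuous_on (closure S) \<Psi>"
        using z0S by (intro holomorphic_on_imp_continuous_on holomorphic_on_subset[OF hol\<Psi>]) blast
      show "bounded S" unfolding S_def by (meson bounded_Int bounded_ball)
      have "0 \<le> r0 * E" using r0 E0 by simp
      moreover have "0 \<le> cmod z0" by simp
      ultimately have "cmod z < R" unfolding R_def by linarith
      then show "z \<in> S" using zpos unfolding S_def by simp
    next
      fix w assume wf: "w \<in> frontier S"
      then have wc: "w \<in> closure S" and wnS: "w \<notin> S"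
        using openS by (auto simp: frontier_def interior_open)
      then have wG: "Re (G w) \<ge> 0" and wR: "cmod w \<le> R" using clS by auto
      have wr0: "cmod (w - z0) \<ge> r0" using outb wG .
      have q1: "r0 / cmod (w - z0) \<le> 1" using wr0 r0 by (simp add: divide_le_eq_1)
      show "cmod (\<Psi> w) \<le> 1"
      proof (cases "Re (G w) = 0")
        case True
        then have "Re (H w) + C1 \<ge> 0" using zero[OF True] ReH[of w] by simp
        then have "exp (- (k * (Re (H w) + C1))) \<le> 1" using k0 by simp
        then show ?thesis unfolding norm\<Psi> using q1 r0
          by (intro mult_le_one) auto
      next
        case False
        then have "cmod w = R" using wnS wG wR by (auto simp: S_def)
        then have big: "cmod (w - z0) \<ge> r0 * E + 1"
          using norm_triangle_ineq2[of w z0] norm_ge_zero[of z] unfolding R_def by linarith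
        have "\<epsilon> * Re (G w) \<ge> 0" using \<epsilon>0 wG by simp
        moreover have "Re (F w) + \<epsilon> * Re (G w) \<ge> -C\<epsilon>" using C\<epsilon> wG by blast
        ultimately have "Re (H w) + C1 \<ge> C1 - C\<epsilon>" using ReH[of w] by linarith
        then have "k * (C1 - C\<epsilon>) \<le> k * (Re (H w) + C1)"
          using k0 by (intro mult_left_mono) auto
        then have "- (k * (Re (H w) + C1)) \<le> k * (C\<epsilon> - C1)" by (simp add: algebra_simps)
        then have e1: "exp (- (k * (Re (H w) + C1))) \<le> E"
          unfolding E_def by simp
        have e2: "r0 / cmod (w - z0) \<le> 1 / E"
        proof -
          have "r0 / cmod (w - z0) \<le> r0 / (r0 * E)"
          proof (rule divide_left_mono)
            show "r0 * E \<le> cmod (w - z0)" using big by linarith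
            have "r0 * E > 0" using r0 E0 by simp
            moreover have "cmod (w - z0) > 0" using big \<open>r0 * E > 0\<close> by linarith
            ultimately show "0 < cmod (w - z0) * (r0 * E)" by simp
          qed (use r0 in simp)
          also have "\<dots> = 1 / E" using r0 by simp
          finally show ?thesis .
        qed
        have "exp (- (k * (Re (H w) + C1))) * (r0 / cmod (w - z0)) \<le> E * (1 / E)"
          using e1 e2 r0 E0 by (intro mult_mono) auto
        then show ?thesis unfolding norm\<Psi> using E0 by simp
      qed
    qed
    then have "exp (- (k * (Re (H z) + C1))) * (r0 / cmod (z - z0)) \<le> 1" unfolding norm\<Psi> .
    moreover have "cmod (z - z0) > 0" using zr r0 by linarith
    ultimately have "exp (- (k * (Re (H z) + C1))) \<le> cmod (z - z0) / r0"
      using r0 aux1 by blast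
    also have "\<dots> = exp L"
    proof -
      have "cmod (z - z0) / r0 > 0" using zr r0 by (intro divide_pos_pos) linarith+
      then show ?thesis unfolding L_def by simp
    qed
    finally have "- (k * (Re (H z) + C1)) \<le> L" by simp
    then have "Re (H z) + C1 \<ge> - L / k" using k0 aux2 by blast
    moreover have "L / k \<le> \<eta> / 2" using L0 \<eta>0 aux3 unfolding k_def by blast
    moreover have "Re (H z) = Re (F z) + \<eta> / 2" using ReH[of z] zpos by (simp add: \<epsilon>_def)
    ultimately show ?thesis by linarith
  qed
  have "Re (F z) \<ge> -C1" if "Re (G z) \<ge> 0" for z
  proof (cases "Re (G z) = 0")
    case True then show ?thesis using zero by blast
  next
    case False
    then have zp: "Re (G z) > 0" using that by simp
    show ?thesis
    proof (rule ccontr)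
      assume nt: "\<not> - C1 \<le> Re (F z)"
      then have "0 < (- C1 - Re (F z)) / 2" by simp
      from main[OF zp this] nt show False by (simp add: field_simps)
    qed
  qed
  then show ?thesis by blast
qed


lemma aux4:
  fixes \<epsilon> h g N :: real
  assumes "\<epsilon> > 0" "h < -\<epsilon> * \<bar>g\<bar>" "0 < N" "N \<le> -h + \<bar>g\<bar>"
  shows "h / N \<le> -\<epsilon>/(1+\<epsilon>)"
proof -
  have "\<epsilon> * \<bar>g\<bar> \<ge> 0" using assms(1) by simp
  then have h0: "h < 0" using assms(2) by linarith
  have M0: "-h + \<bar>g\<bar> > 0" using h0 by linarith
  have "h / N \<le> h / (-h + \<bar>g\<bar>)"
    using assms(3,4) h0 M0 by (intro divide_left_mono_neg) auto
  also have "\<dots> \<le> -\<epsilon>/(1+\<epsilon>)"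
  proof -
    have "h * (1 + \<epsilon>) \<le> -\<epsilon> * (-h + \<bar>g\<bar>)" using assms(2) by (simp add: algebra_simps)
    then show ?thesis using M0 assms(1) by (simp add: divide_simps)
  qed
  finally show ?thesis .
qed

lemma growth:
  fixes u v :: "complex \<Rightarrow> real"
  assumes A: "asym_dirs (range (\<lambda>z. Complex (u z) (v z)))
           \<subseteq> {cis \<theta> | \<theta>. \<alpha> - pi/2 \<le> \<theta> \<and> \<theta> \<le> \<alpha> + pi/2}"
  shows "\<forall>\<epsilon>>0. \<exists>C. \<forall>z. cos \<alpha> * u z + sin \<alpha> * v z \<ge> -\<epsilon> * \<bar>- sin \<alpha> * u z + cos \<alpha> * v z\<bar> - C"
proof (rule ccontr)
  define hh where "hh = (\<lambda>z. cos \<alpha> * u z + sin \<alpha> * v z)"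
  define gg where "gg = (\<lambda>z. - sin \<alpha> * u z + cos \<alpha> * v z)"
  define f where "f = (\<lambda>z. Complex (u z) (v z))"
  have rot: "f z * cis (-\<alpha>) = Complex (hh z) (gg z)" for z
    by (simp add: f_def hh_def gg_def complex_eq_iff cis.ctr algebra_simps)
  have nf: "cmod (f z) = cmod (Complex (hh z) (gg z))" for z
    using arg_cong[OF rot[of z], of cmod] by (simp add: norm_mult)
  assume "\<not> ?thesis"
  then obtain \<epsilon> where \<epsilon>0: "\<epsilon> > 0" and bad: "\<forall>C. \<exists>z. hh z < -\<epsilon> * \<bar>gg z\<bar> - C"
    unfolding hh_def gg_def by (auto simp: not_le)
  then have "\<forall>n::nat. \<exists>z. hh z < -\<epsilon> * \<bar>gg z\<bar> - (real n + 1)" by blast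
  then obtain zs where zs: "\<And>n. hh (zs n) < -\<epsilon> * \<bar>gg (zs n)\<bar> - (real n + 1)"
    by metis
  define w where "w = (\<lambda>n. f (zs n))"
  define e where "e = (\<lambda>n. 1 / cmod (w n))"
  have wbig: "cmod (w n) > real n + 1" for n
  proof -
    have "\<epsilon> * \<bar>gg (zs n)\<bar> \<ge> 0" using \<epsilon>0 by simp
    then have "\<bar>hh (zs n)\<bar> > real n + 1" using zs[of n] by linarith
    also have "\<bar>hh (zs n)\<bar> \<le> cmod (w n)"
      using abs_Re_le_cmod[of "Complex (hh (zs n)) (gg (zs n))"] by (simp add: w_def nf)
    finally show ?thesis .
  qed
  have wpos: "cmod (w n) > 0" for n using wbig[of n] by linarith
  have epos: "e n > 0" for n using wpos[of n] by (simp add: e_def)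
  have e0: "e \<longlonglongrightarrow> 0"
  proof (rule LIMSEQ_norm_0)
    fix n
    have "norm (e n) = 1 / cmod (w n)" using wpos[of n] by (simp add: e_def)
    also have "\<dots> < 1 / real (Suc n)"
      using wbig[of n] wpos[of n] by (intro divide_strict_left_mono) auto
    finally show "norm (e n) < 1 / real (Suc n)" .
  qed
  define x where "x = (\<lambda>n. complex_of_real (e n) * w n)"
  have xs: "x n \<in> sphere 0 1" for n
  proof -
    have "cmod (x n) = e n * cmod (w n)" using epos[of n] by (simp add: x_def norm_mult)
    also have "\<dots> = 1" using wpos[of n] by (simp add: e_def)
    finally show ?thesis by simp
  qed
  obtain l r where l: "l \<in> sphere 0 1" and r: "strict_mono r" and lim: "(x \<circ> r) \<longlonglongrightarrow> l"
    using seq_compactE[OF compact_imp_seq_compact[OF compact_sphere]] xs by blast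
  have "l \<in> asym_dirs (range f)"
    unfolding asym_dirs_def
  proof (intro CollectI conjI exI)
    show "cmod l = 1" using l by simp
    show "\<forall>n. (w \<circ> r) n \<in> range f \<and> 0 < (e \<circ> r) n" using epos by (simp add: w_def)
    show "(e \<circ> r) \<longlonglongrightarrow> 0" using LIMSEQ_subseq_LIMSEQ[OF e0 r] .
    show "(\<lambda>n. complex_of_real ((e \<circ> r) n) * (w \<circ> r) n) \<longlonglongrightarrow> l"
      using lim by (simp add: x_def comp_def)
  qed
  then obtain \<theta> where l\<theta>: "l = cis \<theta>" and \<theta>: "\<alpha> - pi/2 \<le> \<theta>" "\<theta> \<le> \<alpha> + pi/2"
    using A unfolding f_def by blast
  have "Re (l * cis (-\<alpha>)) = cos (\<theta> - \<alpha>)"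
    by (simp add: l\<theta> cis_mult)
  moreover have "cos (\<theta> - \<alpha>) \<ge> 0" using \<theta> by (intro cos_ge_zero) auto
  moreover have "Re (l * cis (-\<alpha>)) \<le> -\<epsilon>/(1+\<epsilon>)"
  proof (rule LIMSEQ_le_const2)
    show "(\<lambda>n. Re ((x \<circ> r) n * cis (-\<alpha>))) \<longlonglongrightarrow> Re (l * cis (-\<alpha>))"
      by (intro tendsto_intros lim)
    have "Re (x n * cis (-\<alpha>)) \<le> -\<epsilon>/(1+\<epsilon>)" for n
    proof -
      have "Re (x n * cis (-\<alpha>)) = e n * hh (zs n)"
        using rot[of "zs n"] by (simp add: x_def w_def mult.assoc)
      also have "\<dots> = hh (zs n) / cmod (w n)" by (simp add: e_def)
      also have "\<dots> \<le> -\<epsilon>/(1+\<epsilon>)"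
      proof (rule aux4[OF \<epsilon>0 _ wpos])
        show "hh (zs n) < - \<epsilon> * \<bar>gg (zs n)\<bar>" using zs[of n] by simp
        have "\<epsilon> * \<bar>gg (zs n)\<bar> \<ge> 0" using \<epsilon>0 by simp
        then have "hh (zs n) < 0" using zs[of n] by linarith
        moreover have "cmod (w n) \<le> \<bar>hh (zs n)\<bar> + \<bar>gg (zs n)\<bar>"
          using cmod_le[of "Complex (hh (zs n)) (gg (zs n))"] by (simp add: w_def nf)
        ultimately show "cmod (w n) \<le> - hh (zs n) + \<bar>gg (zs n)\<bar>" by simp
      qed
      finally show ?thesis .
    qed
    then show "\<exists>N. \<forall>n\<ge>N. Re ((x \<circ> r) n * cis (-\<alpha>)) \<le> -\<epsilon>/(1+\<epsilon>)" by auto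
  qed
  moreover have "-\<epsilon>/(1+\<epsilon>) < 0" using \<epsilon>0 by simp
  ultimately show False by linarith
qed


lemma neg_ball:
  assumes hQ: "Q holomorphic_on UNIV" and "Re (Q z1) < 0"
  shows "\<exists>r>0. \<forall>w\<in>ball z1 r. Re (Q w) < 0"
proof -
  have "continuous_on UNIV (\<lambda>w. Re (Q w))"
    using holomorphic_on_imp_continuous_on[OF hQ] by (intro continuous_intros)
  then have "open {w. Re (Q w) < 0}"
    by (intro open_Collect_less continuous_on_const)
  then obtain r where "r > 0" "ball z1 r \<subseteq> {w. Re (Q w) < 0}"
    using assms(2) unfolding open_contains_ball by blast
  then show ?thesis by blast
qed

lemma rot_repr:
  fixes a b u v :: real
  assumes ReP: "a = cos \<alpha> * u + sin \<alpha> * v" and ReQ: "b = - sin \<alpha> * u + cos \<alpha> * v"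
  shows "Complex u v = cis \<alpha> * Complex a b"
proof (rule complex_eqI)
  have sc: "cos \<alpha> * cos \<alpha> + sin \<alpha> * sin \<alpha> = 1" by simp
  have "Re (cis \<alpha> * Complex a b) = cos \<alpha> * (cos \<alpha> * u) + sin \<alpha> * (sin \<alpha> * u)"
    by (simp add: ReP ReQ cis.ctr algebra_simps)
  also have "\<dots> = u" by (metis sc distrib_right mult.assoc mult_1_left)
  finally show "Re (Complex u v) = Re (cis \<alpha> * Complex a b)" by simp
  have "Im (cis \<alpha> * Complex a b) = cos \<alpha> * (cos \<alpha> * v) + sin \<alpha> * (sin \<alpha> * v)"
    by (simp add: ReP ReQ cis.ctr algebra_simps)
  also have "\<dots> = v" by (metis sc distrib_right mult.assoc mult_1_left)
  finally show "Im (Complex u v) = Im (cis \<alpha> * Complex a b)" by simp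
qed

theorem theorem2:
  fixes u v :: "complex \<Rightarrow> real" and \<alpha> :: real
  assumes "harmonic u" and "harmonic v"
    and "asym_dirs (range (\<lambda>z. Complex (u z) (v z)))
           \<subseteq> {cis \<theta> | \<theta>. \<alpha> - pi/2 \<le> \<theta> \<and> \<theta> \<le> \<alpha> + pi/2}"
  shows "(\<exists>c::real. \<forall>z. cos \<alpha> * u z + sin \<alpha> * v z = c) \<and>
         ((\<exists>p. range (\<lambda>z. Complex (u z) (v z)) = {p}) \<or>
          (\<exists>p d. d \<noteq> 0 \<and> range (\<lambda>z. Complex (u z) (v z)) = {p + complex_of_real t * d | t. True}))"
proof -
  obtain F where hF: "F holomorphic_on UNIV" and ReF: "\<forall>z. Re (F z) = u z"
    using harmonic_re[OF assms(1)] by blast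
  obtain G where hG: "G holomorphic_on UNIV" and ReG: "\<forall>z. Re (G z) = v z"
    using harmonic_re[OF assms(2)] by blast
  define P where "P = (\<lambda>z. of_real (cos \<alpha>) * F z + of_real (sin \<alpha>) * G z)"
  define Q where "Q = (\<lambda>z. of_real (- sin \<alpha>) * F z + of_real (cos \<alpha>) * G z)"
  have hP: "P holomorphic_on UNIV" unfolding P_def using hF hG by (intro holomorphic_intros)
  have hQ: "Q holomorphic_on UNIV" unfolding Q_def using hF hG by (intro holomorphic_intros)
  have ReP: "Re (P z) = cos \<alpha> * u z + sin \<alpha> * v z" for z by (simp add: P_def ReF ReG)
  have ReQ: "Re (Q z) = - sin \<alpha> * u z + cos \<alpha> * v z" for z by (simp add: Q_def ReF ReG)
  have gr: "\<forall>\<epsilon>>0. \<exists>C. \<forall>z. Re (P z) \<ge> -\<epsilon> * \<bar>Re (Q z)\<bar> - C"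
    using growth[OF assms(3)] by (simp add: ReP ReQ)
  have Pbdd: "\<exists>B. \<forall>z. Re (P z) \<ge> B"
  proof (cases "\<forall>z. Re (Q z) = Re (Q 0)")
    case True
    obtain C where C: "\<forall>z. Re (P z) \<ge> -1 * \<bar>Re (Q z)\<bar> - C" using gr zero_less_one by blast
    have "Re (P z) \<ge> - \<bar>Re (Q 0)\<bar> - C" for z using C[rule_format, of z] True[rule_format, of z] by simp
    then show ?thesis by blast
  next
    case False
    have "\<exists>z1. Re (Q z1) < 0"
    proof (rule ccontr)
      assume "\<not> ?thesis"
      then have "\<And>z. Re (Q z) \<ge> 0" by (simp add: not_less)
      then show False using False re_bounded_below_const[OF hQ] by blast
    qed
    then obtain z1 where "Re (Q z1) < 0" by blast
    then obtain r1 where r1: "r1 > 0" "\<forall>w\<in>ball z1 r1. Re (Q w) < 0" using neg_ball[OF hQ] by blast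
    have "\<exists>z2. Re (- Q z2) < 0"
    proof (rule ccontr)
      assume "\<not> ?thesis"
      then have "\<And>z. Re (Q z) \<le> 0" by (simp add: not_less)
      then show False using False re_bounded_above_const[OF hQ] by blast
    qed
    then obtain z2 where "Re (- Q z2) < 0" by blast
    moreover have hQ': "(\<lambda>z. - Q z) holomorphic_on UNIV" using hQ by (intro holomorphic_intros)
    ultimately obtain r2 where r2: "r2 > 0" "\<forall>w\<in>ball z2 r2. Re (- Q w) < 0"
      using neg_ball[OF hQ', of z2] by blast
    have gr1: "\<forall>\<epsilon>>0. \<exists>C. \<forall>w. Re (Q w) \<ge> 0 \<longrightarrow> Re (P w) + \<epsilon> * Re (Q w) \<ge> -C"
    proof (intro allI impI)
      fix \<epsilon> :: real assume "\<epsilon> > 0"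
      then obtain C where C: "\<forall>z. Re (P z) \<ge> -\<epsilon> * \<bar>Re (Q z)\<bar> - C" using gr by blast
      have "Re (P w) + \<epsilon> * Re (Q w) \<ge> -C" if "Re (Q w) \<ge> 0" for w
        using C[rule_format, of w] that by simp
      then show "\<exists>C. \<forall>w. Re (Q w) \<ge> 0 \<longrightarrow> Re (P w) + \<epsilon> * Re (Q w) \<ge> -C" by blast
    qed
    have gr2: "\<forall>\<epsilon>>0. \<exists>C. \<forall>w. Re (- Q w) \<ge> 0 \<longrightarrow> Re (P w) + \<epsilon> * Re (- Q w) \<ge> -C"
    proof (intro allI impI)
      fix \<epsilon> :: real assume "\<epsilon> > 0"
      then obtain C where C: "\<forall>z. Re (P z) \<ge> -\<epsilon> * \<bar>Re (Q z)\<bar> - C" using gr by blast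
      have "Re (P w) + \<epsilon> * Re (- Q w) \<ge> -C" if "Re (- Q w) \<ge> 0" for w
        using C[rule_format, of w] that by simp
      then show "\<exists>C. \<forall>w. Re (- Q w) \<ge> 0 \<longrightarrow> Re (P w) + \<epsilon> * Re (- Q w) \<ge> -C" by blast
    qed
    obtain C1 where C1: "\<forall>z. Re (Q z) \<ge> 0 \<longrightarrow> Re (P z) \<ge> -C1"
      using key[OF hP hQ r1 gr1] by blast
    obtain C2 where C2: "\<forall>z. Re (- Q z) \<ge> 0 \<longrightarrow> Re (P z) \<ge> -C2"
      using key[OF hP hQ' r2 gr2] by blast
    have "Re (P z) \<ge> - max C1 C2" for z
      using C1[rule_format, of z] C2[rule_format, of z] by (cases "Re (Q z) \<ge> 0") auto
    then show ?thesis by blast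
  qed
  then obtain B where "\<And>z. Re (P z) \<ge> B" by blast
  then have Pc: "Re (P z) = Re (P 0)" for z using re_bounded_below_const[OF hP] by blast
  have part1: "\<exists>c::real. \<forall>z. cos \<alpha> * u z + sin \<alpha> * v z = c"
    using Pc ReP by metis
  have sc: "cos \<alpha> * cos \<alpha> + sin \<alpha> * sin \<alpha> = 1"
    by (metis sin_cos_squared_add2 power2_eq_square)
  have repr: "Complex (u z) (v z) = cis \<alpha> * Complex (Re (P 0)) (Re (Q z))" for z
  proof -
    have "Complex (u z) (v z) = cis \<alpha> * Complex (Re (P z)) (Re (Q z))"
      by (rule rot_repr) (simp_all add: ReP ReQ)
    then show ?thesis using Pc[of z] by simp
  qed
  have part2: "(\<exists>p. range (\<lambda>z. Complex (u z) (v z)) = {p}) \<or>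
          (\<exists>p d. d \<noteq> 0 \<and> range (\<lambda>z. Complex (u z) (v z)) = {p + complex_of_real t * d | t. True})"
  proof (cases "\<forall>z. Re (Q z) = Re (Q 0)")
    case True
    then have "range (\<lambda>z. Complex (u z) (v z)) = {cis \<alpha> * Complex (Re (P 0)) (Re (Q 0))}"
      using repr by auto
    then show ?thesis by blast
  next
    case False
    have surj: "\<exists>z. Re (Q z) = t" for t
    proof -
      have "\<exists>z1. Re (Q z1) < t"
      proof (rule ccontr)
        assume "\<not> ?thesis"
        then have "\<And>z. Re (Q z) \<ge> t" by (simp add: not_less)
        then show False using False re_bounded_below_const[OF hQ] by blast
      qed
      then obtain z1 where z1: "Re (Q z1) < t" by blast
      have "\<exists>z2. Re (Q z2) > t"
      proof (rule ccontr)
        assume "\<not> ?thesis"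
        then have "\<And>z. Re (Q z) \<le> t" by (simp add: not_less)
        then show False using False re_bounded_above_const[OF hQ] by blast
      qed
      then obtain z2 where z2: "Re (Q z2) > t" by blast
      have "continuous_on UNIV (\<lambda>w. Re (Q w))"
        using holomorphic_on_imp_continuous_on[OF hQ] by (intro continuous_intros)
      then have "connected (range (\<lambda>w. Re (Q w)))"
        by (intro connected_continuous_image connected_UNIV)
      then have "t \<in> range (\<lambda>w. Re (Q w))"
        by (rule connectedD_interval[of _ "Re (Q z1)" "Re (Q z2)"]) (use z1 z2 in auto)
      then show ?thesis by auto
    qed
    define p where "p = cis \<alpha> * of_real (Re (P 0))"
    define d where "d = cis \<alpha> * \<i>"
    have dnz: "d \<noteq> 0" by (simp add: d_def)
    have eq: "cis \<alpha> * Complex (Re (P 0)) s = p + complex_of_real s * d" for s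
      by (simp add: p_def d_def complex_eq_iff algebra_simps)
    have "range (\<lambda>z. Complex (u z) (v z)) = {p + complex_of_real t * d | t. True}"
    proof (intro set_eqI iffI)
      fix y assume "y \<in> range (\<lambda>z. Complex (u z) (v z))"
      then obtain z where "y = Complex (u z) (v z)" by blast
      then have "y = p + complex_of_real (Re (Q z)) * d" using repr eq by simp
      then show "y \<in> {p + complex_of_real t * d | t. True}" by blast
    next
      fix y assume "y \<in> {p + complex_of_real t * d | t. True}"
      then obtain t where yt: "y = p + complex_of_real t * d" by blast
      obtain z where "Re (Q z) = t" using surj by blast
      then have "y = Complex (u z) (v z)" using repr[of z] eq[of t] yt by simp
      then show "y \<in> range (\<lambda>z. Complex (u z) (v z))" by (rule range_eqI)
    qed
    then show ?thesis by (intro disjI2 exI[of _ p] exI[of _ d] conjI dnz)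
  qed
  show ?thesis by (intro conjI part1 part2)
qed

end
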